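(* Let $b,c\mid n$. For $\underline m\in\mathbb Z^{(b,c)}$ and $w\in\mathbb Z$, the chain map $[\underline m,w]:S^{\lambda_b}\to S^{\lambda_c}$ is chain homotopic to zero if and only if $\sum_im_i+(b,c)w=0$. Consequently, the rule sending the class of $[\underline m,w]$ to $\sum_im_i+(b,c)w$ is a well-defined isomorphism $[S^{\lambda_b},S^{\lambda_c}]\to\mathbb Z$.
   Context: $n$ is a fixed odd positive integer, $C_n$ cyclic of order $n$ with generator $t$; for $d\mid n$, $\Theta_d=C_n/\langle t^d\rangle$, $p$ denotes canonical projections $\Theta_d\to\Theta_e$ ($e\mid d$), $\pi_d:\Theta_d\to\Theta_1$ the projection to a point, and $t$ the action of the generator. $\underline{\mathbb Z}$ is the constant Mackey functor for $C_n$ with value $\mathbb Z$, $\underline{\mathbb Z}$-modules are modules over it, with restriction $f^*$ and transfer $f_*$. $F_d$ is the free $\underline{\mathbb Z}$-module on $g_d\in F_d(\Theta_d)$ ($F_1=\underline{\mathbb Z}$); for $f:\Theta_d\to\Theta_e$, $Rf:F_d\to F_e$ sends $g_d\mapsto f^*(g_e)$ and $If:F_e\to F_d$ sends $g_e\mapsto f_*(g_d)$. For $b\mid n$, $S^{\lambda_b}$ is the chain complex $F_b\xrightarrow{\mathrm{id}-Rt}F_b\xrightarrow{R\pi_b}\underline{\mathbb Z}$ in homological degrees $2,1,0$; $[X,Y]$ denotes morphisms in the derived category of $\underline{\mathbb Z}$-modules (for these bounded free complexes, chain homotopy classes of chain maps). Let $(b,c)$, $[b,c]$ be gcd and lcm.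 For $\underline m=(m_0,\dots,m_{(b,c)-1})\in\mathbb Z^{(b,c)}$, $\langle\underline m\rangle:F_b\to F_c$ is the map $g_b\mapsto\sum_im_i(t_* )^ip_*p^*(g_c)$, where $p^*$ is restriction along $\Theta_{[b,c]}\to\Theta_c$ and $p_*$ transfer along $\Theta_{[b,c]}\to\Theta_b$ (every map $F_b\to F_c$ is uniquely of this form). $I\pi R\pi:F_b\to F_c$ is $I\pi_c\circ R\pi_b$. For $w\in\mathbb Z$, $[\underline m,w]:S^{\lambda_b}\to S^{\lambda_c}$ is the chain map equal to $\langle\underline m\rangle+w\,I\pi R\pi$ in degree 2, $\langle\underline m\rangle$ in degree 1, and multiplication by $\frac{c}{(b,c)}\sum_im_i$ in degree 0; every chain map $S^{\lambda_b}\to S^{\lambda_c}$ has this form. *)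

theory Defs
  imports Main
begin

text \<open>
By Yoshida's theorem, the full subcategory of free
Z-modules (cohomological Mackey functors for C_n) on the orbits Theta_d is the
category of permutation modules Z[Theta_d].  We identify Theta_d with
{0..<d}, the generator t acting by x |-> (x+1) mod d.  An element of
F_c(Theta_d) is a C_n-equivariant integer matrix Theta_c x Theta_d (rows
indexed by Theta_c, columns by Theta_d), and a morphism F_d -> F_e is
identified with the image of g_d, i.e. an element of F_e(Theta_d).
Composition of morphisms is matrix multiplication.
\<close>

type_synonym imat = "nat \<Rightarrow> nat \<Rightarrow> int"

definition hom :: "nat \<Rightarrow> nat \<Rightarrow> imat \<Rightarrow> bool" where
  "hom e d M \<longleftrightarrow>
     (\<forall>y x. (e \<le> y \<or> d \<le> x) \<longrightarrow> M y x = 0) \<and>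
     (\<forall>y<e. \<forall>x<d. M ((y + 1) mod e) ((x + 1) mod d) = M y x)"

definition mcomp :: "nat \<Rightarrow> imat \<Rightarrow> imat \<Rightarrow> imat" where
  "mcomp k N M = (\<lambda>z x. \<Sum>y<k. N z y * M y x)"

definition madd :: "imat \<Rightarrow> imat \<Rightarrow> imat" where
  "madd M N = (\<lambda>y x. M y x + N y x)"

definition msub :: "imat \<Rightarrow> imat \<Rightarrow> imat" where
  "msub M N = (\<lambda>y x. M y x - N y x)"

definition msmult :: "int \<Rightarrow> imat \<Rightarrow> imat" where
  "msmult k M = (\<lambda>y x. k * M y x)"

definition msum :: "nat set \<Rightarrow> (nat \<Rightarrow> imat) \<Rightarrow> imat" where
  "msum A f = (\<lambda>y x. \<Sum>i\<in>A. f i y x)"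

definition idm :: "nat \<Rightarrow> imat" where
  "idm d = (\<lambda>y x. if x < d \<and> y = x then 1 else 0)"

definition transp :: "imat \<Rightarrow> imat" where
  "transp M = (\<lambda>y x. M x y)"

definition proj :: "nat \<Rightarrow> nat \<Rightarrow> nat" where "proj e x = x mod e"
definition ppt :: "nat \<Rightarrow> nat" where "ppt x = 0"
definition tact :: "nat \<Rightarrow> nat \<Rightarrow> nat" where "tact d x = (x + 1) mod d"

definition Lin :: "nat \<Rightarrow> nat \<Rightarrow> (nat \<Rightarrow> nat) \<Rightarrow> imat" where
  "Lin d e f = (\<lambda>y x. if x < d \<and> y < e \<and> f x = y then 1 else 0)"

text \<open>Generator g_c of F_c, in F_c(Theta_c).\<close>
definition gen :: "nat \<Rightarrow> imat" where "gen c = idm c"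

definition restr :: "nat \<Rightarrow> nat \<Rightarrow> (nat \<Rightarrow> nat) \<Rightarrow> imat \<Rightarrow> imat" where
  "restr d e f \<alpha> = mcomp e \<alpha> (Lin d e f)"

definition transf :: "nat \<Rightarrow> nat \<Rightarrow> (nat \<Rightarrow> nat) \<Rightarrow> imat \<Rightarrow> imat" where
  "transf d e f \<beta> = mcomp d \<beta> (transp (Lin d e f))"

definition Rm :: "nat \<Rightarrow> nat \<Rightarrow> (nat \<Rightarrow> nat) \<Rightarrow> imat" where
  "Rm d e f = restr d e f (gen e)"

definition Im :: "nat \<Rightarrow> nat \<Rightarrow> (nat \<Rightarrow> nat) \<Rightarrow> imat" where
  "Im d e f = transf d e f (gen d)"

definition angle :: "nat \<Rightarrow> nat \<Rightarrow> (nat \<Rightarrow> int) \<Rightarrow> imat" where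
  "angle b c m =
     (let L = lcm b c in
      msum {..<gcd b c} (\<lambda>i. msmult (m i)
        ((transf b b (tact b) ^^ i) (transf L b (proj b) (restr L c (proj c) (gen c))))))"

definition IpiRpi :: "nat \<Rightarrow> nat \<Rightarrow> imat" where
  "IpiRpi b c = mcomp 1 (Im c 1 ppt) (Rm b 1 ppt)"

text \<open>Differentials of S^{lambda_b}: F_b --(id - Rt)--> F_b --(R pi_b)--> Z.\<close>
definition dS2 :: "nat \<Rightarrow> imat" where "dS2 b = msub (idm b) (Rm b b (tact b))"
definition dS1 :: "nat \<Rightarrow> imat" where "dS1 b = Rm b 1 ppt"

text \<open>A chain map S^{lambda_b} -> S^{lambda_c} is a triple (f2, f1, f0) of
components in degrees 2, 1, 0.\<close>
type_synonym chmap = "imat \<times> imat \<times> imat"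

definition is_chain_map :: "nat \<Rightarrow> nat \<Rightarrow> chmap \<Rightarrow> bool" where
  "is_chain_map b c f \<longleftrightarrow> (case f of (f2, f1, f0) \<Rightarrow>
     hom c b f2 \<and> hom c b f1 \<and> hom 1 1 f0 \<and>
     mcomp b f1 (dS2 b) = mcomp c (dS2 c) f2 \<and>
     mcomp c (dS1 c) f1 = mcomp 1 f0 (dS1 b))"

definition chain_maps :: "nat \<Rightarrow> nat \<Rightarrow> chmap set" where
  "chain_maps b c = {f. is_chain_map b c f}"

definition null_htpc :: "nat \<Rightarrow> nat \<Rightarrow> chmap \<Rightarrow> bool" where
  "null_htpc b c f \<longleftrightarrow> (case f of (f2, f1, f0) \<Rightarrow>
     (\<exists>h0 h1. hom c 1 h0 \<and> hom c b h1 \<and>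
        f0 = mcomp c (dS1 c) h0 \<and>
        f1 = madd (mcomp c (dS2 c) h1) (mcomp 1 h0 (dS1 b)) \<and>
        f2 = mcomp b h1 (dS2 b)))"

definition chadd :: "chmap \<Rightarrow> chmap \<Rightarrow> chmap" where
  "chadd f g = (case f of (f2, f1, f0) \<Rightarrow> case g of (g2, g1, g0) \<Rightarrow>
     (madd f2 g2, madd f1 g1, madd f0 g0))"

definition chsub :: "chmap \<Rightarrow> chmap \<Rightarrow> chmap" where
  "chsub f g = (case f of (f2, f1, f0) \<Rightarrow> case g of (g2, g1, g0) \<Rightarrow>
     (msub f2 g2, msub f1 g1, msub f0 g0))"

definition htpc_rel :: "nat \<Rightarrow> nat \<Rightarrow> (chmap \<times> chmap) set" where
  "htpc_rel b c = {(f, g). is_chain_map b c f \<and> is_chain_map b c g \<and> null_htpc b c (chsub f g)}"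

definition chm :: "nat \<Rightarrow> nat \<Rightarrow> (nat \<Rightarrow> int) \<Rightarrow> int \<Rightarrow> chmap" where
  "chm b c m w =
     (madd (angle b c m) (msmult w (IpiRpi b c)),
      angle b c m,
      msmult (int (c div gcd b c) * (\<Sum>i<gcd b c. m i)) (idm 1))"

end

theory Submission
  imports Defs
begin

definition kap :: "nat \<Rightarrow> nat \<Rightarrow> nat \<Rightarrow> nat" where
  "kap g y z = nat ((int z - int y) mod int g)"

lemma kap_int: "g > 0 \<Longrightarrow> int (kap g y z) = (int z - int y) mod int g"
  unfolding kap_def by simp

lemma kap_lt: "g > 0 \<Longrightarrow> kap g y z < g"
  unfolding kap_def by (simp add: nat_less_iff)

lemma kap_eq_iff: "g > 0 \<Longrightarrow> kap g y z = k \<longleftrightarrow> k < g \<and> int g dvd (int z - int y - int k)"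
proof -
  assume g: "g > 0"
  have "kap g y z = k \<longleftrightarrow> int (kap g y z) = int k" by simp
  also have "\<dots> \<longleftrightarrow> (int z - int y) mod int g = int k" using kap_int[OF g] by simp
  also have "\<dots> \<longleftrightarrow> k < g \<and> int g dvd (int z - int y - int k)"
  proof
    assume h: "(int z - int y) mod int g = int k"
    then have "k < g" using g by (metis int_ops(1) of_nat_0_less_iff of_nat_less_iff pos_mod_bound)
    moreover have "int g dvd (int z - int y - int k)" using h
      by (metis dvd_minus_mod)
    ultimately show "k < g \<and> int g dvd (int z - int y - int k)" by simp
  next
    assume h: "k < g \<and> int g dvd (int z - int y - int k)"
    then have "(int z - int y) mod int g = int k mod int g"
      by (metis mod_eq_dvd_iff)
    then show "(int z - int y) mod int g = int k" using h by simp
  qed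
  finally show ?thesis .
qed

lemma crt:
  assumes b: "b > 0" and c: "c > 0" and d: "int (gcd b c) dvd (u - v)"
  shows "\<exists>x::nat. int c dvd (int x - u) \<and> int b dvd (int x - v)"
proof -
  obtain s t where st: "s * int c + t * int b = gcd (int c) (int b)" using bezout_int by blast
  have gg: "gcd (int c) (int b) = int (gcd b c)" by (simp add: gcd.commute)
  obtain k where k: "u - v = int (gcd b c) * k" using d by (auto elim: dvdE)
  define x0 where "x0 = u - k * s * int c"
  have hg: "int (gcd b c) = s * int c + t * int b" using st gg by simp
  have x0v: "x0 - v = k * t * int b" using k unfolding x0_def hg by (simp add: algebra_simps)
  define x where "x = nat (x0 mod (int c * int b))"
  have xint: "int x = x0 mod (int c * int b)" unfolding x_def using b c by simp
  have e: "int x - x0 = - (int c * int b) * (x0 div (int c * int b))"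
    unfolding xint by (simp add: minus_div_mult_eq_mod[symmetric] algebra_simps)
  have "int x - u = - (int c * int b) * (x0 div (int c * int b)) - k * s * int c"
    using e unfolding x0_def by (simp add: algebra_simps)
  also have "\<dots> = int c * (- int b * (x0 div (int c * int b)) - k * s)" by (simp add: algebra_simps)
  finally have 1: "int c dvd (int x - u)" by (metis dvd_triv_left)
  have "int x - v = - (int c * int b) * (x0 div (int c * int b)) + k * t * int b"
    using e x0v by (simp add: algebra_simps)
  also have "\<dots> = int b * (- int c * (x0 div (int c * int b)) + k * t)" by (simp add: algebra_simps)
  finally have 2: "int b dvd (int x - v)" by (metis dvd_triv_left)
  from 1 2 show ?thesis by blast
qed

lemma kap_cong: "g > 0 \<Longrightarrow> int g dvd ((int z' - int y') - (int z - int y)) \<Longrightarrow> kap g y' z' = kap g y z"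
  unfolding kap_def by (metis mod_eq_dvd_iff)

lemma dvd_mod_diff: "int g dvd int b \<Longrightarrow> int g dvd (int (a mod b) - int a)"
proof -
  assume h: "int g dvd int b"
  have "int (a mod b) - int a = - int b * int (a div b)"
    by (simp add: zmod_int zdiv_int minus_div_mult_eq_mod[symmetric] algebra_simps)
  then show ?thesis using h by simp
qed

definition circ :: "nat \<Rightarrow> nat \<Rightarrow> (nat \<Rightarrow> int) \<Rightarrow> imat" where
  "circ c b \<phi> = (\<lambda>y z. if y < c \<and> z < b then \<phi> (kap (gcd b c) y z) else 0)"

lemma kap_shift:
  assumes "b > 0" "c > 0"
  shows "kap (gcd b c) ((y+1) mod c) ((z+1) mod b) = kap (gcd b c) y z"
proof (rule kap_cong)
  show "gcd b c > 0" using assms by simp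
  have 1: "int (gcd b c) dvd (int ((z+1) mod b) - int (z+1))"
    by (rule dvd_mod_diff) simp
  have 2: "int (gcd b c) dvd (int ((y+1) mod c) - int (y+1))"
    by (rule dvd_mod_diff) simp
  have "(int ((z+1) mod b) - int ((y+1) mod c)) - (int z - int y) =
     (int ((z+1) mod b) - int (z+1)) - (int ((y+1) mod c) - int (y+1))" by simp
  then show "int (gcd b c) dvd (int ((z+1) mod b) - int ((y+1) mod c)) - (int z - int y)"
    using 1 2 by (metis dvd_diff)
qed

lemma hom_circ: "b > 0 \<Longrightarrow> c > 0 \<Longrightarrow> hom c b (circ c b \<phi>)"
  unfolding hom_def circ_def using kap_shift by auto

lemma hom_iter:
  assumes "hom c b M" "y < c" "x < b"
  shows "M ((y + j) mod c) ((x + j) mod b) = M y x"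
proof (induction j)
  case 0 then show ?case using assms by simp
next
  case (Suc j)
  have "c > 0" "b > 0" using assms by auto
  then have "(y+j) mod c < c" "(x+j) mod b < b" by auto
  then have "M (((y+j) mod c + 1) mod c) (((x+j) mod b + 1) mod b) = M ((y + j) mod c) ((x + j) mod b)"
    using assms(1) unfolding hom_def by blast
  moreover have "(y + Suc j) mod c = ((y+j) mod c + 1) mod c" "(x + Suc j) mod b = ((x+j) mod b + 1) mod b"
    by (simp_all add: mod_Suc_eq)
  ultimately show ?case using Suc by simp
qed

lemma hom_imp_circ:
  assumes h: "hom c b M" and b: "b > 0" and c: "c > 0"
  shows "M = circ c b (\<lambda>i. M 0 i)"
proof (intro ext)
  fix y z
  show "M y z = circ c b (\<lambda>i. M 0 i) y z"
  proof (cases "y < c \<and> z < b")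
    case False
    then show ?thesis using h unfolding hom_def circ_def by auto
  next
    case True
    define g where "g = gcd b c"
    have g: "g > 0" using b unfolding g_def by simp
    define k where "k = kap g y z"
    have kk: "k < g \<and> int g dvd (int z - int y - int k)" using kap_eq_iff[OF g] k_def by blast
    have gb: "g \<le> b" unfolding g_def using b by (simp add: gcd_le1_nat)
    have "int g dvd (- int y - (int k - int z))" using kk
      by (metis (no_types, opaque_lifting) diff_diff_eq2 diff_minus_eq_add dvd_minus_iff minus_diff_eq uminus_add_conv_diff)
    then obtain j where j1: "int c dvd (int j - (- int y))" and j2: "int b dvd (int j - (int k - int z))"
      using crt[OF b c] unfolding g_def by blast
    have "c dvd (y + j)" using j1 by (metis add.commute diff_minus_eq_add int_dvd_int_iff of_nat_add)
    then have e1: "(y + j) mod c = 0" by simp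
    have "int b dvd (int (z + j) - int k)" using j2 by (simp add: algebra_simps)
    then have "int (z + j) mod int b = int k mod int b" by (metis mod_eq_dvd_iff)
    then have "int ((z + j) mod b) = int k" using kk gb by (simp add: of_nat_mod)
    then have e2: "(z + j) mod b = k" by simp
    have "M y z = M 0 k" using hom_iter[OF h True[THEN conjunct1] True[THEN conjunct2], of j] e1 e2 by simp
    then show ?thesis using True unfolding circ_def k_def g_def by simp
  qed
qed

lemma mcomp_idm_left: "mcomp e (idm e) M = (\<lambda>z x. if z < e then M z x else 0)"
proof (intro ext)
  fix z x
  have "(\<Sum>y<e. idm e z y * M y x) = (\<Sum>y<e. if z = y then M y x else 0)"
    by (rule sum.cong) (auto simp: idm_def)
  then show "mcomp e (idm e) M z x = (if z < e then M z x else 0)"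
    unfolding mcomp_def by simp
qed

lemma pred_eq: "(y::nat) < c \<Longrightarrow> u < c \<Longrightarrow> (y = (u+1) mod c) \<longleftrightarrow> (u = (y + c - 1) mod c)"
proof -
  assume a: "y < c" "u < c"
  show ?thesis
  proof (cases "u + 1 < c")
    case True
    show ?thesis
    proof (cases y)
      case 0
      have "(c - 1) mod c = c - 1" using a by simp
      then show ?thesis using 0 True a by simp
    next
      case (Suc y')
      have "(y + c - 1) mod c = y'" using Suc a by simp
      then show ?thesis using Suc True by auto
    qed
  next
    case False
    then have u: "u = c - 1" using a by simp
    then show ?thesis using a by (cases y) (auto simp: mod_if)
  qed
qed

lemma Rm_tact: "Rm b b (tact b) = (\<lambda>u z. if z < b \<and> u < b \<and> u = (z+1) mod b then 1 else 0)"
  unfolding Rm_def restr_def gen_def mcomp_idm_left Lin_def tact_def by (auto intro!: ext)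

lemma dS2_eq: "dS2 b = (\<lambda>u z. (if z < b \<and> u = z then 1 else 0) - (if z < b \<and> u < b \<and> u = (z+1) mod b then 1 else 0))"
  unfolding dS2_def msub_def Rm_tact idm_def by (auto intro!: ext)

lemma dS1_eq: "dS1 b = (\<lambda>y x. if x < b \<and> y = 0 then 1 else 0)"
  unfolding dS1_def Rm_def restr_def gen_def mcomp_idm_left Lin_def ppt_def by (auto intro!: ext)

lemma Im_eq: "Im c 1 ppt = (\<lambda>z x. if z < c \<and> x = 0 then 1 else 0)"
  unfolding Im_def transf_def gen_def mcomp_idm_left Lin_def ppt_def transp_def by (auto intro!: ext)

lemma IpiRpi_eq: "IpiRpi b c = (\<lambda>z x. if z < c \<and> x < b then 1 else 0)"
  unfolding IpiRpi_def Im_eq dS1_eq[unfolded dS1_def] mcomp_def by (auto intro!: ext)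

lemma IpiRpi_circ: "IpiRpi b c = circ c b (\<lambda>_. 1)"
  unfolding IpiRpi_eq circ_def by simp

lemma kap_plus1:
  assumes g: "g > 0" and d: "int g dvd ((int z' - int y') - (int z - int y + 1))"
  shows "kap g y' z' = (kap g y z + 1) mod g"
proof -
  have "int (kap g y' z') = (int z' - int y') mod int g" using kap_int[OF g] by simp
  also have "\<dots> = (int z - int y + 1) mod int g" using d by (metis mod_eq_dvd_iff)
  also have "\<dots> = ((int z - int y) mod int g + 1) mod int g" by (simp add: mod_add_left_eq)
  also have "\<dots> = int ((kap g y z + 1) mod g)" using kap_int[OF g] by (simp add: of_nat_mod ac_simps)
  finally show ?thesis by simp
qed

lemma kap_succ_z:
  assumes b: "b > 0" and c: "c > 0"
  shows "kap (gcd b c) y ((z+1) mod b) = (kap (gcd b c) y z + 1) mod gcd b c"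
proof (rule kap_plus1)
  show "gcd b c > 0" using b by simp
  have 1: "int (gcd b c) dvd (int ((z+1) mod b) - int (z+1))"
    by (rule dvd_mod_diff) simp
  have eq: "(int ((z+1) mod b) - int y) - (int z - int y + 1) = int ((z+1) mod b) - int (z+1)" by simp
  show "int (gcd b c) dvd (int ((z+1) mod b) - int y) - (int z - int y + 1)" unfolding eq by (rule 1)
qed

lemma kap_pred_y:
  assumes b: "b > 0" and c: "c > 0" and y: "y < c"
  shows "kap (gcd b c) ((y + c - 1) mod c) z = (kap (gcd b c) y z + 1) mod gcd b c"
proof (rule kap_plus1)
  show "gcd b c > 0" using b by simp
  have 1: "int (gcd b c) dvd (int ((y + c - 1) mod c) - int (y + c - 1))"
    by (rule dvd_mod_diff) simp
  have 2: "int (gcd b c) dvd int c" by simp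
  have "(int z - int ((y + c - 1) mod c)) - (int z - int y + 1) = - (int ((y + c - 1) mod c) - int (y + c - 1)) - int c"
    using c by (simp add: of_nat_diff)
  then show "int (gcd b c) dvd (int z - int ((y + c - 1) mod c)) - (int z - int y + 1)" using 1 2
    by (metis dvd_diff dvd_minus_iff)
qed

lemma sum_delta_mult: "(\<Sum>u<(b::nat). f u * (if P \<and> u = a then 1 else 0)) = (if P \<and> a < b then f a else (0::int))"
proof (cases P)
  case True
  have "(\<Sum>u<b. f u * (if P \<and> u = a then 1 else 0)) = (\<Sum>u<b. if u = a then f u else 0)"
    by (rule sum.cong) (auto simp: True)
  also have "\<dots> = (if a \<in> {..<b} then f a else 0)" by (rule sum.delta) (rule finite_lessThan)
  finally show ?thesis using True by simp
qed simp

lemma sum_delta_mult': "(\<Sum>u<(b::nat). (if P \<and> u = a then 1 else 0) * f u) = (if P \<and> a < b then f a else (0::int))"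
  using sum_delta_mult[of f P a b] by (simp add: mult.commute)

lemma dS2_eq': "b > 0 \<Longrightarrow> dS2 b = (\<lambda>u z. (if z < b \<and> u = z then 1 else 0) - (if z < b \<and> u = (z+1) mod b then 1 else 0))"
  unfolding dS2_eq by (auto intro!: ext)

lemma dS2_eq'': "c > 0 \<Longrightarrow> dS2 c y u = (if y < c \<and> u = y then 1 else 0) - (if y < c \<and> u = (y + c - 1) mod c then 1 else 0)"
  unfolding dS2_eq using pred_eq[of y c u] by auto

lemma mcomp_circ_dS2:
  assumes b: "b > 0" and c: "c > 0"
  shows "mcomp b (circ c b \<phi>) (dS2 b) = circ c b (\<lambda>k. \<phi> k - \<phi> ((k+1) mod gcd b c))"
proof (intro ext)
  fix y z
  have "mcomp b (circ c b \<phi>) (dS2 b) y z = (if z < b then circ c b \<phi> y z - circ c b \<phi> y ((z+1) mod b) else 0)"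
    unfolding mcomp_def dS2_eq'[OF b] using b
    by (simp add: right_diff_distrib sum_subtractf sum_delta_mult)
  then show "mcomp b (circ c b \<phi>) (dS2 b) y z = circ c b (\<lambda>k. \<phi> k - \<phi> ((k+1) mod gcd b c)) y z"
    using b by (auto simp: circ_def kap_succ_z[OF b c, simplified])
qed

lemma mcomp_dS2_circ:
  assumes b: "b > 0" and c: "c > 0"
  shows "mcomp c (dS2 c) (circ c b \<phi>) = circ c b (\<lambda>k. \<phi> k - \<phi> ((k+1) mod gcd b c))"
proof (intro ext)
  fix y z
  have "mcomp c (dS2 c) (circ c b \<phi>) y z = (if y < c then circ c b \<phi> y z - circ c b \<phi> ((y + c - 1) mod c) z else 0)"
    unfolding mcomp_def dS2_eq''[OF c] using c
    by (simp add: left_diff_distrib sum_subtractf sum_delta_mult')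
  then show "mcomp c (dS2 c) (circ c b \<phi>) y z = circ c b (\<lambda>k. \<phi> k - \<phi> ((k+1) mod gcd b c)) y z"
    using c by (auto simp: circ_def kap_pred_y[OF b c, simplified])
qed

lemma periodic_sum:
  fixes f :: "nat \<Rightarrow> int"
  assumes p: "\<And>u. f (u + g) = f u"
  shows "sum f {..<q*g} = int q * sum f {..<g}"
proof (induction q)
  case 0 then show ?case by simp
next
  case (Suc q)
  have per: "f (i + q*g) = f i" for i
  proof (induction q)
    case 0 then show ?case by simp
  next
    case (Suc q)
    have "f (i + Suc q * g) = f ((i + q*g) + g)" by (simp add: algebra_simps)
    then show ?case using p Suc by simp
  qed
  have "sum f {..<Suc q * g} = sum f {0..<q*g+g}" by (simp add: atLeast0LessThan algebra_simps)
  also have "\<dots> = sum f {0..<q*g} + sum f {q*g..<q*g+g}"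
    by (rule sum.atLeastLessThan_concat[symmetric]) simp_all
  also have "sum f {q*g..<q*g+g} = sum f {0+q*g..<g+q*g}" by (simp add: add.commute)
  also have "\<dots> = sum (\<lambda>i. f (i + q*g)) {0..<g}" by (rule sum.shift_bounds_nat_ivl)
  also have "\<dots> = sum f {..<g}" using per by (simp add: atLeast0LessThan)
  finally show ?case using Suc by (simp add: atLeast0LessThan algebra_simps)
qed

lemma kap_invol: "g > 0 \<Longrightarrow> u < g \<Longrightarrow> kap g (kap g u z) z = u"
proof -
  assume g: "g > 0" and u: "u < g"
  have "int z - int (kap g u z) - int u = int g * ((int z - int u) div int g)"
    using kap_int[OF g, of u z] by (simp add: minus_mod_eq_mult_div[symmetric] algebra_simps)
  then show ?thesis using kap_eq_iff[OF g] u by simp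
qed

lemma sum_kap:
  assumes g: "g > 0"
  shows "(\<Sum>u<g. \<phi> (kap g u z)) = (\<Sum>i<g. \<phi> i)"
  by (rule sum.reindex_bij_witness[where i="\<lambda>i. kap g i z" and j="\<lambda>i. kap g i z"])
     (auto simp: kap_invol[OF g] kap_lt[OF g])

lemma sum_kap_c:
  assumes b: "b > 0" and c: "c > 0"
  shows "(\<Sum>u<c. \<phi> (kap (gcd b c) u z)) = int (c div gcd b c) * (\<Sum>i<gcd b c. \<phi> i)"
proof -
  define g where "g = gcd b c"
  have g: "g > 0" using b unfolding g_def by simp
  have cq: "c = (c div g) * g" unfolding g_def by simp
  have p: "\<phi> (kap g (u + g) z) = \<phi> (kap g u z)" for u
    by (rule arg_cong[where f=\<phi>], rule kap_cong[OF g]) simp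
  have "(\<Sum>u<c. \<phi> (kap g u z)) = (\<Sum>u<(c div g) * g. \<phi> (kap g u z))" using cq by simp
  also have "\<dots> = int (c div g) * (\<Sum>u<g. \<phi> (kap g u z))"
    by (rule periodic_sum[where f="\<lambda>u. \<phi> (kap g u z)"]) (rule p)
  also have "\<dots> = int (c div g) * (\<Sum>i<g. \<phi> i)" using sum_kap[OF g, of \<phi> z] by simp
  finally show ?thesis unfolding g_def .
qed

lemma mcomp_dS1_circ:
  assumes b: "b > 0" and c: "c > 0"
  shows "mcomp c (dS1 c) (circ c b \<phi>) = (\<lambda>y z. if y = 0 \<and> z < b then int (c div gcd b c) * (\<Sum>i<gcd b c. \<phi> i) else 0)"
proof (intro ext)
  fix y z
  have "mcomp c (dS1 c) (circ c b \<phi>) y z = (if y = 0 then (\<Sum>u<c. circ c b \<phi> u z) else 0)"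
    unfolding mcomp_def dS1_eq by auto
  also have "\<dots> = (if y = 0 \<and> z < b then (\<Sum>u<c. \<phi> (kap (gcd b c) u z)) else 0)"
    unfolding circ_def by auto
  finally show "mcomp c (dS1 c) (circ c b \<phi>) y z = (if y = 0 \<and> z < b then int (c div gcd b c) * (\<Sum>i<gcd b c. \<phi> i) else 0)"
    using sum_kap_c[OF b c] by simp
qed

lemma dvd_iff_diff: "(k::int) dvd (A - B) \<Longrightarrow> k dvd A \<longleftrightarrow> k dvd B"
  by (metis dvd_add_right_iff diff_add_cancel)

lemma lcm_unique:
  fixes x x' b c :: nat
  assumes "x < lcm b c" "x' < lcm b c" "x mod c = x' mod c" "x mod b = x' mod b"
  shows "x = x'"
proof -
  have *: "x1 = x2" if h: "x1 < lcm b c" "x2 < lcm b c" "x1 mod c = x2 mod c" "x1 mod b = x2 mod b" "x2 \<le> x1"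
    for x1 x2 :: nat
  proof (rule ccontr)
    assume ne: "x1 \<noteq> x2"
    have "c dvd x1 - x2" "b dvd x1 - x2" using h by (simp_all add: mod_eq_dvd_iff_nat)
    then have "lcm b c dvd x1 - x2" by (simp add: lcm_least)
    moreover have "0 < x1 - x2" "x1 - x2 < lcm b c" using h ne by auto
    ultimately show False using nat_dvd_not_less by blast
  qed
  show ?thesis
  proof (cases "x' \<le> x")
    case True then show ?thesis using * assms by blast
  next
    case False then show ?thesis using *[of x' x] assms by simp
  qed
qed

lemma restr_eq: "restr L c (proj c) (gen c) = (\<lambda>y x. if x < L \<and> y < c \<and> x mod c = y then 1 else 0)"
  unfolding restr_def gen_def mcomp_idm_left Lin_def proj_def by (auto intro!: ext)

lemma transf_proj_eq: "transf L b (proj b) \<beta> = (\<lambda>y z. \<Sum>x<L. \<beta> y x * (if z < b \<and> x mod b = z then 1 else 0))"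
  unfolding transf_def mcomp_def transp_def Lin_def proj_def
  by (intro ext sum.cong) auto

lemma Q_eq:
  assumes b: "b > 0" and c: "c > 0"
  shows "transf (lcm b c) b (proj b) (restr (lcm b c) c (proj c) (gen c)) =
    (\<lambda>y z. if y < c \<and> z < b \<and> int (gcd b c) dvd (int z - int y) then 1 else 0)"
proof (intro ext)
  fix y z
  define L where "L = lcm b c"
  have Q: "transf L b (proj b) (restr L c (proj c) (gen c)) y z =
     (\<Sum>x<L. if y < c \<and> z < b \<and> x mod c = y \<and> x mod b = z then 1 else 0)"
    unfolding transf_proj_eq restr_eq by (intro sum.cong) auto
  show "transf (lcm b c) b (proj b) (restr (lcm b c) c (proj c) (gen c)) y z =
    (if y < c \<and> z < b \<and> int (gcd b c) dvd (int z - int y) then 1 else 0)"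
  proof (cases "y < c \<and> z < b \<and> int (gcd b c) dvd (int z - int y)")
    case True
    then have yz: "y < c" "z < b" by auto
    have "int (gcd b c) dvd (int y - int z)" using True by (metis dvd_minus_iff minus_diff_eq)
    then obtain x0 where x0: "int c dvd (int x0 - int y)" "int b dvd (int x0 - int z)"
      using crt[OF b c] by blast
    define x where "x = x0 mod L"
    have L: "L > 0" unfolding L_def using b c by (simp add: lcm_pos_nat)
    have xL: "x < L" unfolding x_def using L by simp
    have "int (x0 mod c) = int (y mod c)" using x0(1) by (simp add: zmod_int mod_eq_dvd_iff)
    then have "x0 mod c = y mod c" by simp
    then have xc: "x mod c = y" unfolding x_def L_def using yz by (simp add: mod_mod_cancel)
    have "int (x0 mod b) = int (z mod b)" using x0(2) by (simp add: zmod_int mod_eq_dvd_iff)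
    then have "x0 mod b = z mod b" by simp
    then have xb: "x mod b = z" unfolding x_def L_def using yz by (simp add: mod_mod_cancel)
    have "(\<Sum>x'<L. if y < c \<and> z < b \<and> x' mod c = y \<and> x' mod b = z then 1 else 0) =
          (\<Sum>x'<L. if x' = x then 1 else (0::int))"
    proof (intro sum.cong refl)
      fix x' assume "x' \<in> {..<L}"
      then have x'L: "x' < L" by simp
      show "(if y < c \<and> z < b \<and> x' mod c = y \<and> x' mod b = z then 1 else 0) = (if x' = x then 1 else (0::int))"
      proof (cases "x' = x")
        case True then show ?thesis using xc xb yz by simp
      next
        case False
        have "\<not> (x' mod c = y \<and> x' mod b = z)"
        proof
          assume "x' mod c = y \<and> x' mod b = z"
          then have "x' = x" using lcm_unique[of x' b c x] x'L xL xc xb unfolding L_def by simp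
          then show False using False by simp
        qed
        then show ?thesis using False by auto
      qed
    qed
    also have "\<dots> = 1" using xL by simp
    finally show ?thesis using Q True unfolding L_def by simp
  next
    case False
    have "(\<Sum>x'<L. if y < c \<and> z < b \<and> x' mod c = y \<and> x' mod b = z then 1 else 0) = (\<Sum>x'<L. (0::int))"
    proof (intro sum.cong refl)
      fix x' assume "x' \<in> {..<L}"
      show "(if y < c \<and> z < b \<and> x' mod c = y \<and> x' mod b = z then 1 else 0) = (0::int)"
      proof (cases "y < c \<and> z < b \<and> x' mod c = y \<and> x' mod b = z")
        case True
        have "int (x' mod c) = int (y mod c)" using True by simp
        then have "int c dvd (int x' - int y)" by (simp add: zmod_int mod_eq_dvd_iff)
        moreover have "int (gcd b c) dvd int c" by simp
        ultimately have 1: "int (gcd b c) dvd (int x' - int y)" by (rule dvd_trans[rotated])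
        have "int (x' mod b) = int (z mod b)" using True by simp
        then have "int b dvd (int x' - int z)" by (simp add: zmod_int mod_eq_dvd_iff)
        moreover have "int (gcd b c) dvd int b" by simp
        ultimately have 2: "int (gcd b c) dvd (int x' - int z)" by (rule dvd_trans[rotated])
        have "int (gcd b c) dvd ((int x' - int y) - (int x' - int z))" using 1 2 by (rule dvd_diff)
        then have "int (gcd b c) dvd (int z - int y)" by simp
        then show ?thesis using False True by simp
      qed simp
    qed
    then show ?thesis using Q False unfolding L_def by simp
  qed
qed

lemma Sh_eq:
  assumes b: "b > 0"
  shows "transf b b (tact b) \<beta> = (\<lambda>y v. if v < b then \<beta> y ((v + b - 1) mod b) else 0)"
proof (intro ext)
  fix y v
  have "transf b b (tact b) \<beta> y v = (\<Sum>u<b. \<beta> y u * (if v < b \<and> u = (v + b - 1) mod b then 1 else 0))"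
    unfolding transf_def mcomp_def transp_def Lin_def tact_def
  proof (intro sum.cong refl)
    fix u assume "u \<in> {..<b}"
    then have u: "u < b" by simp
    show "\<beta> y u * (if u < b \<and> v < b \<and> (u + 1) mod b = v then 1 else 0) =
          \<beta> y u * (if v < b \<and> u = (v + b - 1) mod b then 1 else 0)"
      using pred_eq[of v b u] u by (cases "v < b") auto
  qed
  also have "\<dots> = (if v < b then \<beta> y ((v + b - 1) mod b) else 0)"
    using b by (simp add: sum_delta_mult)
  finally show "transf b b (tact b) \<beta> y v = (if v < b then \<beta> y ((v + b - 1) mod b) else 0)" .
qed

lemma Sh_iter:
  assumes b: "b > 0" and c: "c > 0"
  shows "(transf b b (tact b) ^^ i) (transf (lcm b c) b (proj b) (restr (lcm b c) c (proj c) (gen c))) =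
    (\<lambda>y z. if y < c \<and> z < b \<and> int (gcd b c) dvd (int z - int y - int i) then 1 else 0)"
proof (induction i)
  case 0
  then show ?case using Q_eq[OF b c] by simp
next
  case (Suc i)
  show ?case
  proof (intro ext)
    fix y z
    have d: "int (gcd b c) dvd ((int ((z + b - 1) mod b) - int y - int i) - (int z - int y - int (Suc i)))"
    proof -
      have 1: "int (gcd b c) dvd (int ((z + b - 1) mod b) - int (z + b - 1))"
        by (rule dvd_mod_diff) simp
      have 2: "int (gcd b c) dvd int b" by simp
      have "(int ((z + b - 1) mod b) - int y - int i) - (int z - int y - int (Suc i)) =
            (int ((z + b - 1) mod b) - int (z + b - 1)) + int b"
        using b by (simp add: of_nat_diff)
      then show ?thesis using 1 2 by (metis dvd_add)
    qed
    show "(transf b b (tact b) ^^ Suc i) (transf (lcm b c) b (proj b) (restr (lcm b c) c (proj c) (gen c))) y z =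
      (if y < c \<and> z < b \<and> int (gcd b c) dvd (int z - int y - int (Suc i)) then 1 else 0)"
      using dvd_iff_diff[OF d] b by (simp add: Sh_eq[OF b] Suc)
  qed
qed

lemma angle_circ:
  assumes b: "b > 0" and c: "c > 0"
  shows "angle b c m = circ c b m"
proof (intro ext)
  fix y z
  define g where "g = gcd b c"
  have g: "g > 0" using b unfolding g_def by simp
  have "angle b c m y z = (\<Sum>i<g. m i * (if y < c \<and> z < b \<and> int g dvd (int z - int y - int i) then 1 else 0))"
    unfolding angle_def Let_def msum_def msmult_def Sh_iter[OF b c] g_def by simp
  also have "\<dots> = (\<Sum>i<g. m i * (if (y < c \<and> z < b) \<and> i = kap g y z then 1 else 0))"
  proof (intro sum.cong refl)
    fix i assume "i \<in> {..<g}"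
    then have "i < g" by simp
    then have "int g dvd (int z - int y - int i) \<longleftrightarrow> i = kap g y z"
      using kap_eq_iff[OF g, of y z i] by auto
    then show "m i * (if y < c \<and> z < b \<and> int g dvd (int z - int y - int i) then 1 else 0) =
               m i * (if (y < c \<and> z < b) \<and> i = kap g y z then 1 else 0)" by simp
  qed
  also have "\<dots> = circ c b m y z"
    unfolding sum_delta_mult circ_def g_def[symmetric] using kap_lt[OF g] by simp
  finally show "angle b c m y z = circ c b m y z" .
qed

lemma madd_circ: "madd (circ c b \<phi>) (circ c b \<psi>) = circ c b (\<lambda>k. \<phi> k + \<psi> k)"
  unfolding madd_def circ_def by (auto intro!: ext)

lemma msmult_circ: "msmult w (circ c b \<phi>) = circ c b (\<lambda>k. w * \<phi> k)"
  unfolding msmult_def circ_def by (auto intro!: ext)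

lemma circ_eq_iff:
  assumes b: "b > 0" and c: "c > 0"
  shows "circ c b \<phi> = circ c b \<psi> \<longleftrightarrow> (\<forall>k < gcd b c. \<phi> k = \<psi> k)"
proof
  assume h: "circ c b \<phi> = circ c b \<psi>"
  show "\<forall>k < gcd b c. \<phi> k = \<psi> k"
  proof (intro allI impI)
    fix k assume k: "k < gcd b c"
    have g: "gcd b c > 0" using b by simp
    have "gcd b c \<le> b" using b by (simp add: gcd_le1_nat)
    then have kb: "k < b" using k by linarith
    have kk: "kap (gcd b c) 0 k = k" using kap_eq_iff[OF g] k by simp
    have "circ c b \<phi> 0 k = circ c b \<psi> 0 k" using h by simp
    then show "\<phi> k = \<psi> k" unfolding circ_def using kk kb c by simp
  qed
next
  assume h: "\<forall>k < gcd b c. \<phi> k = \<psi> k"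
  have g: "gcd b c > 0" using b by simp
  show "circ c b \<phi> = circ c b \<psi>" unfolding circ_def using h kap_lt[OF g] by (auto intro!: ext)
qed

lemma chm_eq:
  assumes b: "b > 0" and c: "c > 0"
  shows "chm b c m w = (circ c b (\<lambda>k. m k + w), circ c b m,
     msmult (int (c div gcd b c) * (\<Sum>i<gcd b c. m i)) (idm 1))"
  unfolding chm_def angle_circ[OF b c] IpiRpi_circ msmult_circ madd_circ by simp

lemma sum_rot:
  assumes g: "(g::nat) > 0"
  shows "(\<Sum>k<g. \<psi> ((k+1) mod g)) = (\<Sum>k<g. (\<psi> k :: int))"
proof -
  obtain g' where g': "g = Suc g'" using g by (cases g) auto
  have "(\<Sum>k<g. \<psi> ((k+1) mod g)) = (\<Sum>k<g'. \<psi> ((k+1) mod g)) + \<psi> ((g'+1) mod g)"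
    unfolding g' by simp
  also have "(\<Sum>k<g'. \<psi> ((k+1) mod g)) = (\<Sum>k<g'. \<psi> (Suc k))"
    by (intro sum.cong refl) (simp add: g')
  also have "\<psi> ((g'+1) mod g) = \<psi> 0" using g' by simp
  also have "(\<Sum>k<g'. \<psi> (Suc k)) + \<psi> 0 = (\<Sum>k<g. \<psi> k)"
    unfolding g' sum.lessThan_Suc_shift by simp
  finally show ?thesis .
qed

definition sval :: "nat \<Rightarrow> nat \<Rightarrow> (nat \<Rightarrow> int) \<Rightarrow> int \<Rightarrow> int" where
  "sval b c m w = (\<Sum>i<gcd b c. m i) + int (gcd b c) * w"

lemma null_imp:
  assumes b: "b > 0" and c: "c > 0" and h: "null_htpc b c (chm b c m w)"
  shows "sval b c m w = 0"
proof -
  define g where "g = gcd b c"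
  have g: "g > 0" using b unfolding g_def by simp
  obtain h0 h1 where hh: "hom c b h1" and f2: "circ c b (\<lambda>k. m k + w) = mcomp b h1 (dS2 b)"
    using h unfolding null_htpc_def chm_eq[OF b c] by auto
  define \<psi> where "\<psi> = (\<lambda>i. h1 0 i)"
  have "h1 = circ c b \<psi>" unfolding \<psi>_def by (rule hom_imp_circ[OF hh b c])
  then have ee: "circ c b (\<lambda>k. m k + w) = circ c b (\<lambda>k. \<psi> k - \<psi> ((k+1) mod g))"
    using f2 mcomp_circ_dS2[OF b c] unfolding g_def by simp
  have e: "\<forall>k<g. m k + w = \<psi> k - \<psi> ((k+1) mod g)"
    using circ_eq_iff[OF b c, of "\<lambda>k. m k + w" "\<lambda>k. \<psi> k - \<psi> ((k+1) mod g)"] ee unfolding g_def by simp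
  have "(\<Sum>k<g. m k + w) = (\<Sum>k<g. \<psi> k - \<psi> ((k+1) mod g))" using e by (intro sum.cong) auto
  also have "\<dots> = 0" using sum_rot[OF g, of \<psi>] by (simp add: sum_subtractf)
  finally show ?thesis unfolding sval_def g_def[symmetric] by (simp add: sum.distrib)
qed

lemma imp_null:
  assumes b: "b > 0" and c: "c > 0" and s: "sval b c m w = 0"
  shows "null_htpc b c (chm b c m w)"
proof -
  define g where "g = gcd b c"
  have g: "g > 0" using b unfolding g_def by simp
  have sm: "(\<Sum>i<g. m i) = - int g * w" using s unfolding sval_def g_def by simp
  define \<psi> where "\<psi> = (\<lambda>k. - (\<Sum>j<k. m j + w))"
  have d: "\<psi> k - \<psi> ((k+1) mod g) = m k + w" if k: "k < g" for k
  proof (cases "k + 1 < g")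
    case True
    then show ?thesis unfolding \<psi>_def by simp
  next
    case False
    then have k1: "k + 1 = g" using k by simp
    have "(\<Sum>j<g. m j + w) = 0" using sm by (simp add: sum.distrib)
    then have "(\<Sum>j<k. m j + w) + (m k + w) = 0" using k1 by (metis lessThan_Suc sum.lessThan_Suc add.commute Suc_eq_plus1)
    then show ?thesis unfolding \<psi>_def using k1 by simp
  qed
  define h1 where "h1 = circ c b \<psi>"
  define h0 where "h0 = circ c 1 (\<lambda>_. - w)"
  have hh1: "hom c b h1" unfolding h1_def by (rule hom_circ[OF b c])
  have hh0: "hom c 1 h0" unfolding h0_def by (rule hom_circ) (use c in simp_all)
  have e2: "mcomp b h1 (dS2 b) = circ c b (\<lambda>k. m k + w)"
    unfolding h1_def mcomp_circ_dS2[OF b c] g_def[symmetric] using d circ_eq_iff[OF b c] g_def by simp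
  have e2': "mcomp c (dS2 c) h1 = circ c b (\<lambda>k. m k + w)"
    unfolding h1_def mcomp_dS2_circ[OF b c] g_def[symmetric] using d circ_eq_iff[OF b c] g_def by simp
  have e0': "mcomp 1 h0 (dS1 b) = circ c b (\<lambda>_. - w)"
    unfolding h0_def mcomp_def dS1_eq circ_def by (auto intro!: ext)
  have e0: "mcomp c (dS1 c) h0 = msmult (int (c div g) * (\<Sum>i<g. m i)) (idm 1)"
  proof -
    have "mcomp c (dS1 c) h0 = (\<lambda>y z. if y = 0 \<and> z < 1 then - int c * w else 0)"
    proof -
      have g1: "gcd 1 c = 1" by simp
      have s1: "(\<Sum>i<(1::nat). - w) = - w" by simp
      show ?thesis unfolding h0_def using mcomp_dS1_circ[of 1 c "\<lambda>_. - w", unfolded g1 s1 div_by_1] c by (simp add: fun_eq_iff)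
    qed
    also have "\<dots> = msmult (int (c div g) * (\<Sum>i<g. m i)) (idm 1)"
    proof -
      have "g dvd c" unfolding g_def by simp
      then have "int (c div g) * (- int g * w) = - int c * w"
        by (metis dvd_div_mult_self mult.assoc mult.commute mult_minus_left of_nat_mult)
      then show ?thesis unfolding msmult_def idm_def sm by (auto intro!: ext)
    qed
    finally show ?thesis .
  qed
  have e1: "circ c b m = madd (mcomp c (dS2 c) h1) (mcomp 1 h0 (dS1 b))"
    unfolding e2' e0' madd_circ by simp
  show ?thesis unfolding null_htpc_def chm_eq[OF b c] g_def[symmetric] prod.case
    apply (rule exI[of _ h0], rule exI[of _ h1]) using hh0 hh1 e0 e1 e2 by simp
qed

lemma mcomp_f0_dS1: "mcomp 1 (msmult s (idm 1)) (dS1 b) = (\<lambda>y z. if y = 0 \<and> z < b then s else 0)"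
  unfolding mcomp_def msmult_def idm_def dS1_eq by (simp add: fun_eq_iff)

lemma hom_f0: "hom 1 1 (msmult s (idm 1))"
  unfolding hom_def msmult_def idm_def by auto

lemma chm_chain:
  assumes b: "b > 0" and c: "c > 0"
  shows "is_chain_map b c (chm b c m w)"
  unfolding is_chain_map_def chm_eq[OF b c] prod.case
  using hom_circ[OF b c] hom_f0 mcomp_circ_dS2[OF b c] mcomp_dS2_circ[OF b c] mcomp_dS1_circ[OF b c] mcomp_f0_dS1
  by simp

lemma chain_is_chm:
  assumes b: "b > 0" and c: "c > 0" and f: "is_chain_map b c f"
  shows "\<exists>m w. f = chm b c m w"
proof -
  define g where "g = gcd b c"
  have g: "g > 0" using b unfolding g_def by simp
  obtain f2 f1 f0 where fe: "f = (f2, f1, f0)" by (cases f) auto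
  have h2: "hom c b f2" and h1: "hom c b f1" and h0: "hom 1 1 f0"
    and e1: "mcomp b f1 (dS2 b) = mcomp c (dS2 c) f2" and e0: "mcomp c (dS1 c) f1 = mcomp 1 f0 (dS1 b)"
    using f unfolding is_chain_map_def fe by auto
  define \<phi>1 where "\<phi>1 = (\<lambda>i. f1 0 i)"
  define \<phi>2 where "\<phi>2 = (\<lambda>i. f2 0 i)"
  have c1: "f1 = circ c b \<phi>1" unfolding \<phi>1_def by (rule hom_imp_circ[OF h1 b c])
  have c2: "f2 = circ c b \<phi>2" unfolding \<phi>2_def by (rule hom_imp_circ[OF h2 b c])
  have "circ c b (\<lambda>k. \<phi>1 k - \<phi>1 ((k+1) mod g)) = circ c b (\<lambda>k. \<phi>2 k - \<phi>2 ((k+1) mod g))"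
    using e1 unfolding c1 c2 mcomp_circ_dS2[OF b c] mcomp_dS2_circ[OF b c] g_def .
  then have d: "\<forall>k<g. \<phi>1 k - \<phi>1 ((k+1) mod g) = \<phi>2 k - \<phi>2 ((k+1) mod g)"
    using circ_eq_iff[OF b c] unfolding g_def by simp
  define D where "D = (\<lambda>k. \<phi>2 k - \<phi>1 k)"
  have DD: "k < g \<Longrightarrow> D k = D 0" for k
  proof (induction k)
    case 0 then show ?case by simp
  next
    case (Suc k)
    then have "k < g" "Suc k mod g = Suc k" by auto
    then have "\<phi>1 k - \<phi>1 (Suc k) = \<phi>2 k - \<phi>2 (Suc k)" using d by auto
    then have "D (Suc k) = D k" unfolding D_def by linarith
    then show ?case using Suc by simp
  qed
  define w where "w = D 0"
  have f2e: "f2 = circ c b (\<lambda>k. \<phi>1 k + w)"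
    unfolding c2 circ_eq_iff[OF b c] g_def[symmetric]
  proof (intro allI impI)
    fix k assume "k < g"
    from DD[OF this] have "\<phi>2 k - \<phi>1 k = \<phi>2 0 - \<phi>1 0" unfolding D_def .
    then show "\<phi>2 k = \<phi>1 k + w" unfolding w_def D_def by linarith
  qed
  define s where "s = int (c div g) * (\<Sum>i<g. \<phi>1 i)"
  have "mcomp c (dS1 c) f1 0 0 = s"
    unfolding c1 mcomp_dS1_circ[OF b c] s_def g_def using b by simp
  moreover have "mcomp 1 f0 (dS1 b) 0 0 = f0 0 0"
    unfolding mcomp_def dS1_eq using b by simp
  ultimately have f00: "f0 0 0 = s" using e0 by simp
  have f0e: "f0 = msmult s (idm 1)"
  proof (intro ext)
    fix y x
    show "f0 y x = msmult s (idm 1) y x"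
    proof (cases "y = 0 \<and> x = 0")
      case True then show ?thesis using f00 unfolding msmult_def idm_def by simp
    next
      case False
      then have "f0 y x = 0" using h0 unfolding hom_def by auto
      then show ?thesis using False unfolding msmult_def idm_def by auto
    qed
  qed
  have "f = chm b c \<phi>1 w"
    unfolding fe chm_eq[OF b c] c1 f2e f0e s_def g_def by simp
  then show ?thesis by blast
qed

lemma chsub_chm:
  assumes b: "b > 0" and c: "c > 0"
  shows "chsub (chm b c m w) (chm b c m' w') = chm b c (\<lambda>i. m i - m' i) (w - w')"
  unfolding chsub_def chm_eq[OF b c] prod.case msub_def circ_def msmult_def
  by (auto simp: fun_eq_iff algebra_simps sum_subtractf)

lemma chadd_chm:
  assumes b: "b > 0" and c: "c > 0"
  shows "chadd (chm b c m w) (chm b c m' w') = chm b c (\<lambda>i. m i + m' i) (w + w')"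
  unfolding chadd_def chm_eq[OF b c] prod.case madd_def circ_def msmult_def
  by (auto simp: fun_eq_iff algebra_simps sum.distrib)

lemma null_iff:
  assumes b: "b > 0" and c: "c > 0"
  shows "null_htpc b c (chm b c m w) \<longleftrightarrow> sval b c m w = 0"
  using null_imp[OF b c] imp_null[OF b c] by blast

lemma rel_chm:
  assumes b: "b > 0" and c: "c > 0"
  shows "(chm b c m w, chm b c m' w') \<in> htpc_rel b c \<longleftrightarrow> sval b c m w = sval b c m' w'"
  unfolding htpc_rel_def using chm_chain[OF b c] chsub_chm[OF b c] null_iff[OF b c]
  by (simp add: sval_def sum_subtractf algebra_simps)

theorem proposition3p4:
  fixes n b c :: nat
  assumes "odd n" and "b dvd n" and "c dvd n"
  shows "(\<forall>m w. null_htpc b c (chm b c m w) \<longleftrightarrow>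
            (\<Sum>i<gcd b c. m i) + int (gcd b c) * w = 0) \<and>
         (\<exists>\<Phi> :: chmap set \<Rightarrow> int.
            (\<forall>m w. \<Phi> (htpc_rel b c `` {chm b c m w}) = (\<Sum>i<gcd b c. m i) + int (gcd b c) * w) \<and>
            bij_betw \<Phi> (chain_maps b c // htpc_rel b c) UNIV \<and>
            (\<forall>f\<in>chain_maps b c. \<forall>g\<in>chain_maps b c.
               \<Phi> (htpc_rel b c `` {chadd f g}) =
               \<Phi> (htpc_rel b c `` {f}) + \<Phi> (htpc_rel b c `` {g})))"
proof -
  have n: "n > 0" using assms(1) by (simp add: odd_pos)
  have b: "b > 0" using assms(2) n by (metis dvd_0_left_iff gr0I not_gr_zero)
  have c: "c > 0" using assms(3) n by (metis dvd_0_left_iff gr0I not_gr_zero)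
  define R where "R = htpc_rel b c"
  define CM where "CM = chain_maps b c"
  have part1: "\<forall>m w. null_htpc b c (chm b c m w) \<longleftrightarrow> (\<Sum>i<gcd b c. m i) + int (gcd b c) * w = 0"
    using null_iff[OF b c] unfolding sval_def by blast
  have rep: "\<exists>m w. f = chm b c m w" if "f \<in> CM" for f
    using chain_is_chm[OF b c] that unfolding CM_def chain_maps_def by blast
  have chmCM: "chm b c m w \<in> CM" for m w
    using chm_chain[OF b c] unfolding CM_def chain_maps_def by blast
  have relc: "(chm b c m w, chm b c m' w') \<in> R \<longleftrightarrow> sval b c m w = sval b c m' w'" for m w m' w'
    unfolding R_def by (rule rel_chm[OF b c])
  have eqv: "equiv CM R"
  proof (rule equivI)
    show "R \<subseteq> CM \<times> CM" unfolding R_def CM_def htpc_rel_def chain_maps_def by auto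
    show "refl_on CM R" unfolding refl_on_def using rep relc by blast
    show "sym R"
    proof (rule symI)
      fix f g assume "(f, g) \<in> R"
      moreover have "f \<in> CM" "g \<in> CM" using \<open>(f, g) \<in> R\<close> unfolding R_def CM_def htpc_rel_def chain_maps_def by auto
      ultimately show "(g, f) \<in> R" using rep relc by metis
    qed
    show "trans R"
    proof (rule transI)
      fix f g h assume fg: "(f, g) \<in> R" and gh: "(g, h) \<in> R"
      have "f \<in> CM" "g \<in> CM" "h \<in> CM" using fg gh unfolding R_def CM_def htpc_rel_def chain_maps_def by auto
      then obtain m1 w1 m2 w2 m3 w3 where "f = chm b c m1 w1" "g = chm b c m2 w2" "h = chm b c m3 w3"
        using rep by metis
      then show "(f, h) \<in> R" using fg gh relc by simp
    qed
  qed
  define \<Phi> where "\<Phi> X = (SOME k. \<exists>m w. X = R `` {chm b c m w} \<and> k = sval b c m w)" for X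
  have \<Phi>c: "\<Phi> (R `` {chm b c m w}) = sval b c m w" for m w
    unfolding \<Phi>_def
  proof (rule someI2)
    show "\<exists>m' w'. R `` {chm b c m w} = R `` {chm b c m' w'} \<and> sval b c m w = sval b c m' w'" by blast
  next
    fix k assume "\<exists>m' w'. R `` {chm b c m w} = R `` {chm b c m' w'} \<and> k = sval b c m' w'"
    then obtain m' w' where e: "R `` {chm b c m w} = R `` {chm b c m' w'}" and k: "k = sval b c m' w'" by blast
    have "(chm b c m w, chm b c m' w') \<in> R" using e eq_equiv_class_iff[OF eqv chmCM chmCM] by blast
    then show "k = sval b c m w" using relc k by simp
  qed
  have inj: "inj_on \<Phi> (CM // R)"
  proof (rule inj_onI)
    fix X Y assume X: "X \<in> CM // R" and Y: "Y \<in> CM // R" and e: "\<Phi> X = \<Phi> Y"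
    obtain f where f: "X = R `` {f}" "f \<in> CM" using X by (rule quotientE)
    obtain g where g: "Y = R `` {g}" "g \<in> CM" using Y by (rule quotientE)
    obtain m w where fm: "f = chm b c m w" using rep f(2) by blast
    obtain m' w' where gm: "g = chm b c m' w'" using rep g(2) by blast
    have "sval b c m w = sval b c m' w'" using e \<Phi>c unfolding f g fm gm by simp
    then have "(f, g) \<in> R" using relc fm gm by simp
    then show "X = Y" unfolding f g using eq_equiv_class_iff[OF eqv f(2) g(2)] by simp
  qed
  have surj: "\<Phi> ` (CM // R) = UNIV"
  proof (intro set_eqI iffI)
    fix k :: int
    define m where "m = (\<lambda>i::nat. if i = 0 then k else 0)"
    have g0: "gcd b c > 0" using b by simp
    have "sval b c m 0 = k" unfolding sval_def m_def using g0 by simp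
    then have "k = \<Phi> (R `` {chm b c m 0})" using \<Phi>c by simp
    moreover have "R `` {chm b c m 0} \<in> CM // R" using chmCM by (rule quotientI)
    ultimately show "k \<in> \<Phi> ` (CM // R)" by blast
  qed simp
  have add: "\<Phi> (R `` {chadd f g}) = \<Phi> (R `` {f}) + \<Phi> (R `` {g})" if fC: "f \<in> CM" and gC: "g \<in> CM" for f g
  proof -
    obtain m w where fm: "f = chm b c m w" using rep fC by blast
    obtain m' w' where gm: "g = chm b c m' w'" using rep gC by blast
    show ?thesis unfolding fm gm chadd_chm[OF b c] \<Phi>c sval_def
      by (simp add: sum.distrib algebra_simps)
  qed
  have "\<forall>m w. \<Phi> (R `` {chm b c m w}) = (\<Sum>i<gcd b c. m i) + int (gcd b c) * w"
    using \<Phi>c unfolding sval_def by simp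
  moreover have "bij_betw \<Phi> (CM // R) UNIV" using inj surj unfolding bij_betw_def by simp
  ultimately show ?thesis using part1 add unfolding R_def CM_def by blast
qed

end
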